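(* Let $r>1$, $q\in(0,1)$ and $p=1-q$. Then: (i) for all integers $k\ge1$, $\displaystyle\sum_{j=1}^{\infty}\frac{(r+k)\cdots(r+j+k-1)}{k(k+1)\cdots(j+k-1)}q^j\le p^{-(r+1)}-1$; (ii) for all integers $k\ge1$, $\displaystyle\sum_{j=1}^{\infty}\frac{(r+k)\cdots(r+j+k-1)}{(k+1)\cdots(j+k)}q^j\le\frac{p^{-r}-1}{rq}-1$; (iii) for all integers $k\ge1$, $\displaystyle\sum_{j=2}^{\infty}\frac{(r+k+1)\cdots(r+j+k-1)}{(k+1)\cdots(j+k-1)}q^j\le\frac{p^{-(r+1)}-1}{r}-q$; (iv) for all integers $k\ge2$, $\displaystyle\sum_{j=1}^{\infty}\frac{(r+k+1)\cdots(r+j+k)}{k(k+1)\cdots(j+k-1)}q^j\le\frac{p^{-(r+2)}-1}{(r+1)q}-1$; (v) for all integers $k\ge2$, $\displaystyle\sum_{j=1}^{\infty}\frac{(r+k)\cdots(r+j+k-1)}{k(k+1)\cdots(j+k)}q^j\le\frac{p^{-r}-1}{r(r+1)q^2}-\frac12$.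
   Context: In each product $(a)\cdots(b)$ the factors increase by $1$ from $a$ to $b$; e.g. $(r+k)\cdots(r+j+k-1)$ has $j$ factors and $k(k+1)\cdots(j+k-1)$ has $j$ factors. *)

theory Defs
  imports Complex_Main
begin

end

theory Submission
  imports Defs "HOL-Analysis.Generalised_Binomial_Theorem"
begin

lemma binser:
  fixes q s :: real assumes "0 < q" "q < 1"
  shows "(\<lambda>n. pochhammer s n / fact n * q^n) sums ((1-q) powr (-s))"
proof -
  have "\<bar>-q\<bar> < 1" using assms by simp
  from gen_binomial_real[OF this, of "-s"]
  have "(\<lambda>n. ((-s) gchoose n) * (-q)^n) sums ((1-q) powr (-s))" by simp
  moreover have "((-s) gchoose n) * (-q)^n = pochhammer s n / fact n * q^n" for n
  proof -
    have "((-s) gchoose n) * (-q)^n = ((-1)^n * (-1)^n) * (pochhammer s n / fact n * q^n)"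
      by (simp add: gbinomial_pochhammer power_minus[of q])
    also have "(-1::real)^n * (-1)^n = 1" by (simp add: power_mult_distrib[symmetric])
    finally show ?thesis by simp
  qed
  ultimately show ?thesis by simp
qed

lemma shifted:
  fixes B :: "nat \<Rightarrow> real"
  assumes "B sums S" shows "(\<lambda>j. B (j+m)) sums (S - sum B {..<m})"
  using assms by (simp add: sums_iff_shift)

lemma tool:
  fixes f g :: "nat \<Rightarrow> real"
  assumes "\<And>j. 0 \<le> f j" "\<And>j. f j \<le> g j" "g sums G" "G \<le> X"
  shows "summable f \<and> suminf f \<le> X"
proof -
  have sg: "summable g" using assms(3) by (rule sums_summable)
  have sf: "summable f"
    by (rule summable_comparison_test[OF _ sg]) (use assms(1,2) in auto)
  have "suminf f \<le> suminf g" by (rule suminf_le) (use assms sf sg in auto)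
  also have "\<dots> = G" using assms(3) by (simp add: sums_iff)
  finally show ?thesis using sf assms(4) by simp
qed

lemma ratio_mono:
  fixes x y x' y' :: real
  assumes "0 < y" "y \<le> y'" "x - y = x' - y'" "y \<le> x"
  shows "pochhammer x' n / pochhammer y' n \<le> pochhammer x n / pochhammer y n"
proof (induction n)
  case 0 then show ?case by simp
next
  case (Suc n)
  have py: "pochhammer y n > 0" "pochhammer y' n > 0" "pochhammer x n > 0" "pochhammer x' n > 0"
    using assms by (auto intro!: pochhammer_pos)
  have fac: "(x' + n) / (y' + n) \<le> (x + n) / (y + n)"
  proof -
    have "(x' + n) / (y' + n) = 1 + (x - y) / (y' + n)" using assms by (simp add: field_simps)
    also have "\<dots> \<le> 1 + (x - y) / (y + n)"
      using assms by (intro add_left_mono divide_left_mono) auto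
    also have "\<dots> = (x + n) / (y + n)" using assms by (simp add: field_simps)
    finally show ?thesis .
  qed
  have "pochhammer x' (Suc n) / pochhammer y' (Suc n)
      = (pochhammer x' n / pochhammer y' n) * ((x' + n) / (y' + n))"
    by (simp add: pochhammer_Suc)
  also have "\<dots> \<le> (pochhammer x n / pochhammer y n) * ((x + n) / (y + n))"
    using Suc.IH fac py assms by (intro mult_mono) auto
  also have "\<dots> = pochhammer x (Suc n) / pochhammer y (Suc n)"
    by (simp add: pochhammer_Suc)
  finally show ?case .
qed


lemma canc: "(c::real) \<noteq> 0 \<Longrightarrow> A / D * Q = c * A / D * Q / c"
  by simp

lemma canc5: "(c::real) \<noteq> 0 \<Longrightarrow> q2 \<noteq> 0 \<Longrightarrow> A / D * (1 / E) * Q = (c * A) / (D * E) * (Q * q2) / (c * q2)"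
  by (simp add: field_simps)

lemma canc4: "(c::real) \<noteq> 0 \<Longrightarrow> q \<noteq> 0 \<Longrightarrow> A / D * (Q / q) = c * A / D * Q / (c * q)"
  by simp

lemma split3: "((P::real) - (1 + a + b)) / D = (P - 1) / D - a / D - b / D"
  by (simp add: diff_divide_distrib add_divide_distrib)

lemma part1:
  fixes r q :: real and k :: nat
  assumes "r > 1" "0 < q" "q < 1" "k \<ge> 1"
  shows "summable (\<lambda>j::nat. pochhammer (r + real k) (j+1) / pochhammer (real k) (j+1) * q ^ (j+1))
   \<and> suminf (\<lambda>j::nat. pochhammer (r + real k) (j+1) / pochhammer (real k) (j+1) * q ^ (j+1)) \<le> (1-q) powr (-(r+1)) - 1"
proof (rule tool)
  let ?B = "\<lambda>n. pochhammer (r+1) n / fact n * q^n"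
  show "(\<lambda>j. ?B (j+1)) sums ((1-q) powr (-(r+1)) - sum ?B {..<1})"
    by (rule shifted[OF binser]) (use assms in auto)
  show "(1-q) powr (-(r+1)) - sum ?B {..<1} \<le> (1-q) powr (-(r+1)) - 1" by simp
  fix j :: nat
  have kp: "real k > 0" using assms by simp
  show "0 \<le> pochhammer (r + real k) (j+1) / pochhammer (real k) (j+1) * q ^ (j+1)"
    using assms kp by (intro mult_nonneg_nonneg divide_nonneg_nonneg less_imp_le[OF pochhammer_pos]) auto
  have "pochhammer (r + real k) (j+1) / pochhammer (real k) (j+1) \<le> pochhammer (r+1) (j+1) / pochhammer 1 (j+1)"
    by (rule ratio_mono) (use assms in auto)
  then have "pochhammer (r + real k) (j+1) / pochhammer (real k) (j+1) * q ^ (j+1) \<le> pochhammer (r+1) (j+1) / pochhammer 1 (j+1) * q ^ (j+1)"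
    by (rule mult_right_mono) (use assms in auto)
  then show "pochhammer (r + real k) (j+1) / pochhammer (real k) (j+1) * q ^ (j+1) \<le> ?B (j+1)"
    by (simp add: pochhammer_fact)
qed

lemma part2:
  fixes r q :: real and k :: nat
  assumes "r > 1" "0 < q" "q < 1" "k \<ge> 1"
  shows "summable (\<lambda>j::nat. pochhammer (r + real k) (j+1) / pochhammer (real k + 1) (j+1) * q ^ (j+1))
   \<and> suminf (\<lambda>j::nat. pochhammer (r + real k) (j+1) / pochhammer (real k + 1) (j+1) * q ^ (j+1)) \<le> ((1-q) powr (-r) - 1) / (r * q) - 1"
proof (rule tool)
  let ?B = "\<lambda>n. pochhammer r n / fact n * q^n"
  have "(\<lambda>j. ?B (j+2)) sums ((1-q) powr (-r) - sum ?B {..<2})"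
    by (rule shifted[OF binser]) (use assms in auto)
  then show "(\<lambda>j. ?B (j+2) / (r*q)) sums (((1-q) powr (-r) - sum ?B {..<2}) / (r*q))"
    by (rule sums_divide)
  have "sum ?B {..<2} = 1 + r * q" by (simp add: numeral_2_eq_2)
  then show "((1-q) powr (-r) - sum ?B {..<2}) / (r*q) \<le> ((1-q) powr (-r) - 1) / (r * q) - 1"
    using assms by (simp add: field_simps)
  fix j :: nat
  have kp: "real k > 0" using assms by simp
  show "0 \<le> pochhammer (r + real k) (j+1) / pochhammer (real k + 1) (j+1) * q ^ (j+1)"
    using assms kp by (intro mult_nonneg_nonneg divide_nonneg_nonneg less_imp_le[OF pochhammer_pos]) auto
  have "pochhammer (r + real k) (j+1) / pochhammer (real k + 1) (j+1) \<le> pochhammer (r+1) (j+1) / pochhammer 2 (j+1)"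
    by (rule ratio_mono) (use assms in auto)
  then have "pochhammer (r + real k) (j+1) / pochhammer (real k + 1) (j+1) * q ^ (j+1)
      \<le> pochhammer (r+1) (j+1) / pochhammer 2 (j+1) * q ^ (j+1)"
    by (rule mult_right_mono) (use assms in auto)
  also have "\<dots> = ?B (j+2) / (r*q)"
  proof -
    have e1: "pochhammer r (Suc (Suc j)) = r * pochhammer (r+1) (Suc j)"
      using pochhammer_rec[of r "Suc j"] by simp
    have e2: "fact (Suc (Suc j)) = (pochhammer 2 (Suc j) :: real)"
      using pochhammer_rec[of "1::real" "Suc j"] by (simp add: pochhammer_fact del: pochhammer_Suc)
    show ?thesis using assms by (simp add: e1 e2 field_simps del: pochhammer_Suc fact_Suc)
  qed
  finally show "pochhammer (r + real k) (j+1) / pochhammer (real k + 1) (j+1) * q ^ (j+1) \<le> ?B (j+2) / (r*q)" .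
qed


lemma Pge1:
  fixes q s :: real assumes "0 < q" "q < 1" "0 \<le> s"
  shows "1 \<le> (1-q) powr (-s)"
proof -
  have a: "(1-q) powr s \<le> 1" using assms by (intro powr_le1) auto
  have b: "(1-q) powr s > 0" using assms by simp
  have "(1-q) powr (-s) = inverse ((1-q) powr s)" by (simp add: powr_minus)
  then show ?thesis using a b by (simp add: one_le_inverse)
qed

lemma part3:
  fixes r q :: real and k :: nat
  assumes "r > 1" "0 < q" "q < 1" "k \<ge> 1"
  shows "summable (\<lambda>j::nat. pochhammer (r + real k + 1) (j+1) / pochhammer (real k + 1) (j+1) * q ^ (j+2))
   \<and> suminf (\<lambda>j::nat. pochhammer (r + real k + 1) (j+1) / pochhammer (real k + 1) (j+1) * q ^ (j+2)) \<le> ((1-q) powr (-(r+1)) - 1) / r - q"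
proof (rule tool)
  let ?B = "\<lambda>n. pochhammer (r+1) n / fact n * q^n"
  have "(\<lambda>j. ?B (j+2)) sums ((1-q) powr (-(r+1)) - sum ?B {..<2})"
    by (rule shifted[OF binser]) (use assms in auto)
  then show "(\<lambda>j. ?B (j+2) / (r+1)) sums (((1-q) powr (-(r+1)) - sum ?B {..<2}) / (r+1))"
    by (rule sums_divide)
  have s: "sum ?B {..<2} = 1 + (r+1) * q" by (simp add: numeral_2_eq_2)
  have P: "1 \<le> (1-q) powr (-(r+1))" using assms by (intro Pge1) auto
  have h: "((1-q) powr (-(r+1)) - 1) / (r+1) \<le> ((1-q) powr (-(r+1)) - 1) / r"
    using P assms by (intro divide_left_mono) auto
  show "((1-q) powr (-(r+1)) - sum ?B {..<2}) / (r+1) \<le> ((1-q) powr (-(r+1)) - 1) / r - q"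
  proof -
    have eq: "\<And>P. (P - (1 + (r+1)*q))/(r+1) = (P-1)/(r+1) - q" using assms by (simp add: field_simps)
    show ?thesis unfolding s eq using h by linarith
  qed
  fix j :: nat
  have kp: "real k > 0" using assms by simp
  show "0 \<le> pochhammer (r + real k + 1) (j+1) / pochhammer (real k + 1) (j+1) * q ^ (j+2)"
    using assms kp by (intro mult_nonneg_nonneg divide_nonneg_nonneg less_imp_le[OF pochhammer_pos]) auto
  have "pochhammer (r + real k + 1) (j+1) / pochhammer (real k + 1) (j+1) \<le> pochhammer (r+2) (j+1) / pochhammer 2 (j+1)"
    by (rule ratio_mono) (use assms in auto)
  then have "pochhammer (r + real k + 1) (j+1) / pochhammer (real k + 1) (j+1) * q ^ (j+2)
      \<le> pochhammer (r+2) (j+1) / pochhammer 2 (j+1) * q ^ (j+2)"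
    by (rule mult_right_mono) (use assms in auto)
  also have "\<dots> = ?B (j+2) / (r+1)"
  proof -
    have e1: "pochhammer (r+1) (j+2) = (r+1) * pochhammer (r+2) (j+1)"
      using pochhammer_rec[of "r+1" "j+1"] by (simp add: add.assoc del: pochhammer_Suc)
    have e2: "fact (j+2) = (pochhammer 2 (j+1) :: real)"
      using pochhammer_rec[of "1::real" "j+1"] by (simp add: pochhammer_fact del: pochhammer_Suc)
    show ?thesis unfolding e1 e2 by (rule canc) (use assms in simp)
  qed
  finally show "pochhammer (r + real k + 1) (j+1) / pochhammer (real k + 1) (j+1) * q ^ (j+2) \<le> ?B (j+2) / (r+1)" .
qed

lemma part4:
  fixes r q :: real and k :: nat
  assumes "r > 1" "0 < q" "q < 1" "k \<ge> 2"
  shows "summable (\<lambda>j::nat. pochhammer (r + real k + 1) (j+1) / pochhammer (real k) (j+1) * q ^ (j+1))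
   \<and> suminf (\<lambda>j::nat. pochhammer (r + real k + 1) (j+1) / pochhammer (real k) (j+1) * q ^ (j+1)) \<le> ((1-q) powr (-(r+2)) - 1) / ((r+1) * q) - 1"
proof (rule tool)
  let ?B = "\<lambda>n. pochhammer (r+2) n / fact n * q^n"
  have "(\<lambda>j. ?B (j+2)) sums ((1-q) powr (-(r+2)) - sum ?B {..<2})"
    by (rule shifted[OF binser]) (use assms in auto)
  then show "(\<lambda>j. ?B (j+2) / ((r+2)*q)) sums (((1-q) powr (-(r+2)) - sum ?B {..<2}) / ((r+2)*q))"
    by (rule sums_divide)
  have s: "sum ?B {..<2} = 1 + (r+2) * q" by (simp add: numeral_2_eq_2)
  have P: "1 \<le> (1-q) powr (-(r+2))" using assms by (intro Pge1) auto
  have "((1-q) powr (-(r+2)) - 1) / ((r+2)*q) \<le> ((1-q) powr (-(r+2)) - 1) / ((r+1)*q)"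
    using P assms by (intro divide_left_mono) auto
  moreover have "((1-q) powr (-(r+2)) - sum ?B {..<2}) / ((r+2)*q) = ((1-q) powr (-(r+2)) - 1) / ((r+2)*q) - 1"
    unfolding s
  proof -
    have c: "(r+2)*q \<noteq> 0" using assms by simp
    have eq: "\<And>P. (P - (1 + (r+2)*q))/((r+2)*q) = (P-1)/((r+2)*q) - 1" using c by (simp add: diff_divide_distrib add_divide_distrib)
    show "((1 - q) powr - (r + 2) - (1 + (r + 2) * q)) / ((r + 2) * q) = ((1 - q) powr - (r + 2) - 1) / ((r + 2) * q) - 1"
      by (rule eq)
  qed
  ultimately show "((1-q) powr (-(r+2)) - sum ?B {..<2}) / ((r+2)*q) \<le> ((1-q) powr (-(r+2)) - 1) / ((r+1) * q) - 1"
    by simp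
  fix j :: nat
  have kp: "real k > 0" using assms by simp
  show "0 \<le> pochhammer (r + real k + 1) (j+1) / pochhammer (real k) (j+1) * q ^ (j+1)"
    using assms kp by (intro mult_nonneg_nonneg divide_nonneg_nonneg less_imp_le[OF pochhammer_pos]) auto
  have "pochhammer (r + real k + 1) (j+1) / pochhammer (real k) (j+1) \<le> pochhammer (r+3) (j+1) / pochhammer 2 (j+1)"
    by (rule ratio_mono) (use assms in auto)
  then have "pochhammer (r + real k + 1) (j+1) / pochhammer (real k) (j+1) * q ^ (j+1)
      \<le> pochhammer (r+3) (j+1) / pochhammer 2 (j+1) * q ^ (j+1)"
    by (rule mult_right_mono) (use assms in auto)
  also have "\<dots> = ?B (j+2) / ((r+2)*q)"
  proof -
    have e1: "pochhammer (r+2) (j+2) = (r+2) * pochhammer (r+3) (j+1)"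
      using pochhammer_rec[of "r+2" "j+1"] by (simp add: add.assoc del: pochhammer_Suc)
    have e2: "fact (j+2) = (pochhammer 2 (j+1) :: real)"
      using pochhammer_rec[of "1::real" "j+1"] by (simp add: pochhammer_fact del: pochhammer_Suc)
    have e3: "q ^ (j+1) = q ^ (j+2) / q" using assms by simp
    show ?thesis unfolding e1 e2 e3 by (rule canc4) (use assms in auto)
  qed
  finally show "pochhammer (r + real k + 1) (j+1) / pochhammer (real k) (j+1) * q ^ (j+1) \<le> ?B (j+2) / ((r+2)*q)" .
qed

lemma part5:
  fixes r q :: real and k :: nat
  assumes "r > 1" "0 < q" "q < 1" "k \<ge> 2"
  shows "summable (\<lambda>j::nat. pochhammer (r + real k) (j+1) / pochhammer (real k) (j+2) * q ^ (j+1))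
   \<and> suminf (\<lambda>j::nat. pochhammer (r + real k) (j+1) / pochhammer (real k) (j+2) * q ^ (j+1)) \<le> ((1-q) powr (-r) - 1) / (r * (r+1) * q^2) - 1/2"
proof (rule tool)
  let ?B = "\<lambda>n. pochhammer r n / fact n * q^n"
  have "(\<lambda>j. ?B (j+3)) sums ((1-q) powr (-r) - sum ?B {..<3})"
    by (rule shifted[OF binser]) (use assms in auto)
  then show "(\<lambda>j. ?B (j+3) / (r*(r+1)*q^2)) sums (((1-q) powr (-r) - sum ?B {..<3}) / (r*(r+1)*q^2))"
    by (rule sums_divide)
  have s: "sum ?B {..<3} = 1 + r * q + r*(r+1)/2*q^2" by (simp add: numeral_3_eq_3 numeral_2_eq_2 power2_eq_square pochhammer_Suc field_simps)
  have "((1-q) powr (-r) - sum ?B {..<3}) / (r*(r+1)*q^2) = ((1-q) powr (-r) - 1) / (r*(r+1)*q^2) - 1/2 - 1/((r+1)*q)"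
  proof -
    have "r \<noteq> 0" "q \<noteq> 0" "r + 1 \<noteq> 0" "1 + r \<noteq> 0" using assms by auto
    then have nz: "r*q \<noteq> 0" "(r+1)*q \<noteq> 0" "r*(r+1)*q^2 \<noteq> 0" by auto
    have f1: "r*(r+1)*q^2 = (r*q)*((r+1)*q)" by (simp add: power2_eq_square algebra_simps)
    have t1: "r * q / (r*(r+1)*q^2) = 1/((r+1)*q)" unfolding f1 using nz by simp
    have f2: "r*(r+1)/2*q^2 = (r*(r+1)*q^2)/2" by simp
    have t2: "r*(r+1)/2*q^2 / (r*(r+1)*q^2) = 1/2" unfolding f2 using nz by simp
    show ?thesis unfolding s split3 t1 t2 by simp
  qed
  moreover have "1/((r+1)*q) \<ge> 0" using assms by simp
  ultimately show "((1-q) powr (-r) - sum ?B {..<3}) / (r*(r+1)*q^2) \<le> ((1-q) powr (-r) - 1) / (r * (r+1) * q^2) - 1/2"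
    by linarith
  fix j :: nat
  have kp: "real k > 0" using assms by simp
  show "0 \<le> pochhammer (r + real k) (j+1) / pochhammer (real k) (j+2) * q ^ (j+1)"
    using assms kp by (intro mult_nonneg_nonneg divide_nonneg_nonneg less_imp_le[OF pochhammer_pos]) auto
  have R: "pochhammer (r + real k) (j+1) / pochhammer (real k) (j+1) \<le> pochhammer (r+2) (j+1) / pochhammer 2 (j+1)"
    by (rule ratio_mono) (use assms in auto)
  have I: "1 / (real k + real (j+1)) \<le> 1 / (2 + real (j+1))"
    using assms by (intro divide_left_mono) auto
  have "pochhammer (r + real k) (j+1) / pochhammer (real k) (j+2) * q ^ (j+1)
      = (pochhammer (r + real k) (j+1) / pochhammer (real k) (j+1)) * (1 / (real k + real (j+1))) * q ^ (j+1)"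
    using pochhammer_Suc[of "real k" "j+1"] by simp
  also have "\<dots> \<le> (pochhammer (r+2) (j+1) / pochhammer 2 (j+1)) * (1 / (2 + real (j+1))) * q ^ (j+1)"
    using R I assms kp
    by (intro mult_right_mono mult_mono) (auto intro!: divide_nonneg_nonneg less_imp_le[OF pochhammer_pos])
  also have "\<dots> = ?B (j+3) / (r*(r+1)*q^2)"
  proof -
    have e1: "pochhammer r (j+3) = r * (r+1) * pochhammer (r+2) (j+1)"
      using pochhammer_rec[of r "j+2"] pochhammer_rec[of "r+1" "j+1"]
      by (simp add: add.assoc numeral_3_eq_3 del: pochhammer_Suc)
    have e2: "fact (j+3) = (pochhammer 2 (j+1) * (2 + real (j+1)) :: real)"
      using pochhammer_rec[of "1::real" "j+2"] pochhammer_Suc[of "2::real" "j+1"]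
      by (simp add: pochhammer_fact numeral_3_eq_3 del: pochhammer_Suc)
    have e3: "q ^ (j+3) = q ^ (j+1) * q^2" by (simp add: power_add[symmetric] numeral_3_eq_3 del: power_Suc)
    show ?thesis unfolding e1 e2 e3 mult.assoc[of r "r+1" "q^2", symmetric] by (rule canc5) (use assms in auto)
  qed
  finally show "pochhammer (r + real k) (j+1) / pochhammer (real k) (j+2) * q ^ (j+1) \<le> ?B (j+3) / (r*(r+1)*q^2)" .
qed


theorem lemmaA2:
  fixes r q p :: real
  assumes "r > 1" and "0 < q" and "q < 1" and "p = 1 - q"
  shows
   "(\<forall>k::nat. k \<ge> 1 \<longrightarrow>
      (let f = (\<lambda>j::nat. pochhammer (r + real k) (j+1) / pochhammer (real k) (j+1) * q ^ (j+1))
       in summable f \<and> suminf f \<le> p powr (-(r+1)) - 1))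
  \<and> (\<forall>k::nat. k \<ge> 1 \<longrightarrow>
      (let f = (\<lambda>j::nat. pochhammer (r + real k) (j+1) / pochhammer (real k + 1) (j+1) * q ^ (j+1))
       in summable f \<and> suminf f \<le> (p powr (-r) - 1) / (r * q) - 1))
  \<and> (\<forall>k::nat. k \<ge> 1 \<longrightarrow>
      (let f = (\<lambda>j::nat. pochhammer (r + real k + 1) (j+1) / pochhammer (real k + 1) (j+1) * q ^ (j+2))
       in summable f \<and> suminf f \<le> (p powr (-(r+1)) - 1) / r - q))
  \<and> (\<forall>k::nat. k \<ge> 2 \<longrightarrow>
      (let f = (\<lambda>j::nat. pochhammer (r + real k + 1) (j+1) / pochhammer (real k) (j+1) * q ^ (j+1))
       in summable f \<and> suminf f \<le> (p powr (-(r+2)) - 1) / ((r+1) * q) - 1))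
  \<and> (\<forall>k::nat. k \<ge> 2 \<longrightarrow>
      (let f = (\<lambda>j::nat. pochhammer (r + real k) (j+1) / pochhammer (real k) (j+2) * q ^ (j+1))
       in summable f \<and> suminf f \<le> (p powr (-r) - 1) / (r * (r+1) * q^2) - 1/2))"
  unfolding Let_def assms(4)
  using part1[OF assms(1,2,3)] part2[OF assms(1,2,3)] part3[OF assms(1,2,3)]
    part4[OF assms(1,2,3)] part5[OF assms(1,2,3)]
  by (intro conjI allI impI) auto

end
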